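(* Let $\rho=\{B_1,\dots,B_r\}$ be a partition of $\{1,\dots,n\}$. For every $\mathbf{m}=(m_1,\dots,m_r)\in\mathbb{Z}^r_0$, the limit $\lim_{N\to\infty}G^\rho_N(\mathbf{m})$ exists and $$\lim_{N\to\infty}G^\rho_N(\mathbf{m})=\lim_{N\to\infty}G^\rho_N(0,\dots,0)=K_{\rho,u}.$$
   Context: $\mathbb{Z}^r_0:=\{(z_1,\dots,z_r)\in\mathbb{Z}^r: z_1+\dots+z_r=0\}$. For $\mathbf{i}=(i_1,\dots,i_n)\in\{1,\dots,N\}^n$ set $i_0:=i_n$ and $E_b(\mathbf{i}):=\sum_{k\in B_b}(i_{k-1}-i_k)$, $b=1,\dots,r$. Define $S^{\rho,\mathbf{m}}_N:=\#\{\mathbf{i}\in\{1,\dots,N\}^n: E_b(\mathbf{i})=m_b\text{ for all }b=1,\dots,r\}$ and $G^\rho_N(\mathbf{m}):=\frac{N^r}{N^{n+1}}S^{\rho,\mathbf{m}}_N$. $K_{\rho,u}:=\lim_{N\to\infty}G^\rho_N(\mathbf{0})$ is the Vandermonde expansion coefficient of $\rho$ for phases uniform on $[-\pi,\pi]$. *)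

theory Defs
  imports "HOL-Analysis.Analysis" "HOL-Library.FuncSet"
begin

definition is_partition :: "nat \<Rightarrow> nat \<Rightarrow> (nat \<Rightarrow> nat set) \<Rightarrow> bool" where
  "is_partition n r B \<longleftrightarrow>
     (\<forall>b\<in>{1..r}. B b \<noteq> {}) \<and>
     (\<forall>b\<in>{1..r}. \<forall>c\<in>{1..r}. b \<noteq> c \<longrightarrow> B b \<inter> B c = {}) \<and>
     (\<Union>b\<in>{1..r}. B b) = {1..n}"

text \<open>Index tuples i = (i_1,...,i_n) in {1..N}^n as extensional functions; i_0 := i_n.\<close>
definition idx_prev :: "nat \<Rightarrow> (nat \<Rightarrow> nat) \<Rightarrow> nat \<Rightarrow> nat" where
  "idx_prev n i k = (if k = 1 then i n else i (k - 1))"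

definition E_blk :: "nat \<Rightarrow> (nat \<Rightarrow> nat set) \<Rightarrow> (nat \<Rightarrow> nat) \<Rightarrow> nat \<Rightarrow> int" where
  "E_blk n B i b = (\<Sum>k\<in>B b. int (idx_prev n i k) - int (i k))"

definition S_count :: "nat \<Rightarrow> nat \<Rightarrow> (nat \<Rightarrow> nat set) \<Rightarrow> (nat \<Rightarrow> int) \<Rightarrow> nat \<Rightarrow> nat" where
  "S_count n r B m N = card {i \<in> {1..n} \<rightarrow>\<^sub>E {1..N}. \<forall>b\<in>{1..r}. E_blk n B i b = m b}"

definition G_fun :: "nat \<Rightarrow> nat \<Rightarrow> (nat \<Rightarrow> nat set) \<Rightarrow> nat \<Rightarrow> (nat \<Rightarrow> int) \<Rightarrow> real" where
  "G_fun n r B N m = (real N ^ r / real N ^ (n + 1)) * real (S_count n r B m N)"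

definition K_u :: "nat \<Rightarrow> nat \<Rightarrow> (nat \<Rightarrow> nat set) \<Rightarrow> real" where
  "K_u n r B = lim (\<lambda>N. G_fun n r B N (\<lambda>_. 0))"

end

theory Submission imports Defs begin

definition pv :: "nat \<Rightarrow> nat \<Rightarrow> nat" where "pv n k = (if k = 1 then n else k - 1)"

definition Ei :: "nat \<Rightarrow> (nat \<Rightarrow> nat set) \<Rightarrow> (nat \<Rightarrow> int) \<Rightarrow> nat \<Rightarrow> int" where
  "Ei n B x b = (\<Sum>k\<in>B b. x (pv n k) - x k)"

lemma E_blk_Ei: "E_blk n B i b = Ei n B (\<lambda>j. int (i j)) b"
  unfolding E_blk_def Ei_def idx_prev_def pv_def
  by (rule sum.cong) auto

lemma pv_range: "k \<in> {1..n} \<Longrightarrow> pv n k \<in> {1..n}"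
  by (auto simp: pv_def)

lemma Ei_lin: "Ei n B (\<lambda>j. a * x j + y j) b = a * Ei n B x b + Ei n B y b"
  unfolding Ei_def by (simp add: sum_distrib_left sum.distrib[symmetric] algebra_simps)

lemma Ei_lin2: "Ei n B (\<lambda>j. a * (x j - 1) + y j) b = a * Ei n B x b + Ei n B y b"
  unfolding Ei_def by (simp add: sum_distrib_left sum.distrib[symmetric] algebra_simps)

lemma Ei_add: "Ei n B (\<lambda>j. x j + y j) b = Ei n B x b + Ei n B y b"
  using Ei_lin[of n B 1 x y b] by simp

lemma Ei_neg: "Ei n B (\<lambda>j. - x j) b = - Ei n B x b"
  unfolding Ei_def by (simp add: sum_negf[symmetric])

lemma Ei_cong: "(\<And>j. j \<in> {1..n} \<Longrightarrow> x j = y j) \<Longrightarrow> B b \<subseteq> {1..n} \<Longrightarrow> Ei n B x b = Ei n B y b"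
  unfolding Ei_def
proof (rule sum.cong)
  fix k assume H: "\<And>j. j \<in> {1..n} \<Longrightarrow> x j = y j" "B b \<subseteq> {1..n}" "k \<in> B b"
  then have k: "k \<in> {1..n}" by blast
  then have "pv n k \<in> {1..n}" by (rule pv_range)
  then show "x (pv n k) - x k = y (pv n k) - y k" using H(1) k by simp
qed simp

locale part =
  fixes n r :: nat and B :: "nat \<Rightarrow> nat set"
  assumes P: "is_partition n r B" and npos: "n \<ge> 1"
begin

lemma nonempty: "b \<in> {1..r} \<Longrightarrow> B b \<noteq> {}"
  using P unfolding is_partition_def by auto
lemma disj: "b \<in> {1..r} \<Longrightarrow> c \<in> {1..r} \<Longrightarrow> b \<noteq> c \<Longrightarrow> B b \<inter> B c = {}"
  using P unfolding is_partition_def by auto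
lemma union: "(\<Union>b\<in>{1..r}. B b) = {1..n}"
  using P unfolding is_partition_def by auto
lemma sub: "b \<in> {1..r} \<Longrightarrow> B b \<subseteq> {1..n}"
  using union by auto
lemma fin: "b \<in> {1..r} \<Longrightarrow> finite (B b)"
  using sub finite_subset by blast

definition rep :: "nat \<Rightarrow> nat" where "rep b = (SOME k. k \<in> B b)"

lemma rep_in: "b \<in> {1..r} \<Longrightarrow> rep b \<in> B b"
  unfolding rep_def using nonempty by (simp add: some_in_eq)

lemma rep_range: "b \<in> {1..r} \<Longrightarrow> rep b \<in> {1..n}"
  using rep_in sub by blast

lemma rep_inB: "b \<in> {1..r} \<Longrightarrow> c \<in> {1..r} \<Longrightarrow> rep c \<in> B b \<longleftrightarrow> c = b"
proof
  assume b: "b \<in> {1..r}" and c: "c \<in> {1..r}" and h: "rep c \<in> B b"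
  show "c = b"
  proof (rule ccontr)
    assume "c \<noteq> b"
    then have "B b \<inter> B c = {}" using disj b c by auto
    then show False using h rep_in[OF c] by auto
  qed
next
  assume "b \<in> {1..r}" "c = b" then show "rep c \<in> B b" using rep_in by simp
qed

lemma rep_inj: "inj_on rep {1..r}"
  unfolding inj_on_def
proof (intro ballI impI)
  fix x y assume "x \<in> {1..r}" "y \<in> {1..r}" "rep x = rep y"
  then show "x = y" using rep_inB[of x y] rep_in[of x] by auto
qed

lemma card_reps: "card (rep ` {1..r}) = r"
  using rep_inj by (simp add: card_image)

lemma r_le_n: "r \<le> n"
proof -
  have "rep ` {1..r} \<subseteq> {1..n}" using rep_range by auto
  then have "card (rep ` {1..r}) \<le> card {1..n}" by (intro card_mono) auto
  then show ?thesis using card_reps by simp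
qed

lemma r_pos: "r \<ge> 1"
proof (rule ccontr)
  assume "\<not> r \<ge> 1" then have "r = 0" by simp
  then have "{1..n} = {}" using union by simp
  then show False using npos by simp
qed

lemma sum_pv: "(\<Sum>k\<in>{1..n}. x (pv n k)) = (\<Sum>k\<in>{1..n}. (x k :: int))"
proof -
  have "bij_betw (pv n) {1..n} {1..n}"
  proof (rule bij_betw_imageI)
    show "inj_on (pv n) {1..n}" unfolding inj_on_def pv_def by auto
    show "pv n ` {1..n} = {1..n}"
    proof
      show "pv n ` {1..n} \<subseteq> {1..n}" using pv_range by auto
      show "{1..n} \<subseteq> pv n ` {1..n}"
      proof
        fix k assume k: "k \<in> {1..n}"
        show "k \<in> pv n ` {1..n}"
        proof (cases "k = n")
          case True then show ?thesis using npos by (intro image_eqI[of _ _ 1]) (auto simp: pv_def)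
        next
          case False then show ?thesis using k by (intro image_eqI[of _ _ "k+1"]) (auto simp: pv_def)
        qed
      qed
    qed
  qed
  then show ?thesis by (rule sum.reindex_bij_betw)
qed

lemma sum_Ei: "(\<Sum>b\<in>{1..r}. Ei n B x b) = 0"
proof -
  have "(\<Sum>b\<in>{1..r}. Ei n B x b) = (\<Sum>k\<in>(\<Union>b\<in>{1..r}. B b). x (pv n k) - x k)"
    unfolding Ei_def
  proof (rule sum.UNION_disjoint[symmetric])
    show "\<forall>i\<in>{1..r}. \<forall>j\<in>{1..r}. i \<noteq> j \<longrightarrow> B i \<inter> B j = {}" using disj by blast
  qed (simp_all add: fin)
  also have "\<dots> = (\<Sum>k\<in>{1..n}. x (pv n k) - x k)" using union by simp
  also have "\<dots> = 0" using sum_pv by (simp add: sum_subtractf)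
  finally show ?thesis .
qed


lemma preimage:
  assumes sw: "(\<Sum>b\<in>{1..r}. w b) = 0"
  shows "\<exists>v. (\<forall>b\<in>{1..r}. Ei n B v b = w b) \<and> (\<forall>k. \<bar>v k\<bar> \<le> (\<Sum>b\<in>{1..r}. \<bar>w b\<bar>))"
proof -
  define v where "v k = - (\<Sum>c\<in>{1..r}. if rep c \<le> k then w c else 0)" for k
  have bnd: "\<bar>v k\<bar> \<le> (\<Sum>b\<in>{1..r}. \<bar>w b\<bar>)" for k
  proof -
    have "\<bar>v k\<bar> \<le> (\<Sum>c\<in>{1..r}. \<bar>if rep c \<le> k then w c else 0\<bar>)"
      unfolding v_def abs_minus_cancel by (rule sum_abs)
    also have "\<dots> \<le> (\<Sum>b\<in>{1..r}. \<bar>w b\<bar>)" by (rule sum_mono) auto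
    finally show ?thesis .
  qed
  have dif: "v (pv n k) - v k = (\<Sum>c\<in>{1..r}. if rep c = k then w c else 0)" if k: "k \<in> {1..n}" for k
  proof (cases "k = 1")
    case True
    have "v n = - (\<Sum>c\<in>{1..r}. w c)" unfolding v_def
      by (rule arg_cong[where f=uminus], rule sum.cong) (use rep_range in auto)
    then have vn: "v n = 0" using sw by simp
    have "v 1 = - (\<Sum>c\<in>{1..r}. if rep c = 1 then w c else 0)" unfolding v_def
      by (rule arg_cong[where f=uminus], rule sum.cong) (use rep_range in fastforce)+
    then show ?thesis using True vn by (simp add: pv_def)
  next
    case False
    then have pk: "pv n k = k - 1" by (simp add: pv_def)
    have "v (k - 1) - v k = (\<Sum>c\<in>{1..r}. (if rep c \<le> k then w c else 0) - (if rep c \<le> k - 1 then w c else 0))"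
      unfolding v_def by (simp add: sum_subtractf)
    also have "\<dots> = (\<Sum>c\<in>{1..r}. if rep c = k then w c else 0)"
      by (rule sum.cong) (use False k in auto)
    finally show ?thesis using pk by simp
  qed
  have "Ei n B v b = w b" if b: "b \<in> {1..r}" for b
  proof -
    have "Ei n B v b = (\<Sum>k\<in>B b. \<Sum>c\<in>{1..r}. if rep c = k then w c else 0)"
      unfolding Ei_def by (rule sum.cong) (use dif sub[OF b] in auto)
    also have "\<dots> = (\<Sum>c\<in>{1..r}. \<Sum>k\<in>B b. if rep c = k then w c else 0)"
      by (rule sum.swap)
    also have "\<dots> = (\<Sum>c\<in>{1..r}. if c = b then w c else 0)"
    proof (rule sum.cong)
      fix c assume c: "c \<in> {1..r}"
      have "(\<Sum>k\<in>B b. if rep c = k then w c else 0) = (if rep c \<in> B b then w c else 0)"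
        using fin[OF b] by (simp add: sum.delta)
      then show "(\<Sum>k\<in>B b. if rep c = k then w c else 0) = (if c = b then w c else 0)"
        using rep_inB[OF b c] by simp
    qed simp
    also have "\<dots> = w b" using b by (simp add: sum.delta)
    finally show ?thesis .
  qed
  then show ?thesis using bnd by blast
qed

definition box :: "nat \<Rightarrow> (nat \<Rightarrow> nat) set" where "box N = {1..n} \<rightarrow>\<^sub>E {1..N}"
definition Sol :: "(nat \<Rightarrow> int) \<Rightarrow> nat \<Rightarrow> (nat \<Rightarrow> nat) set" where
  "Sol w N = {i \<in> box N. \<forall>b\<in>{1..r}. E_blk n B i b = w b}"

lemma S_Sol: "S_count n r B w N = card (Sol w N)"
  unfolding S_count_def Sol_def box_def by simp

lemma finite_box: "finite (box N)" unfolding box_def by (simp add: finite_PiE)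
lemma finite_Sol: "finite (Sol w N)" unfolding Sol_def using finite_box by simp

lemma chain_eq:
  assumes i: "i \<in> box N" and i': "i' \<in> box N" and j: "j \<in> {1..n}" and ij: "i j = i' j"
    and d: "\<And>k. k \<in> {1..n} \<Longrightarrow> int (i (pv n k)) - int (i k) = int (i' (pv n k)) - int (i' k)"
  shows "i = i'"
proof -
  define \<delta> where "\<delta> k = int (i k) - int (i' k)" for k
  have step: "\<delta> (k - 1) = \<delta> k" if "2 \<le> k" "k \<le> n" for k
    using d[of k] that unfolding \<delta>_def pv_def by auto
  have all: "\<delta> k = \<delta> 1" if "1 \<le> k" "k \<le> n" for k
    using that
  proof (induction k)
    case 0 then show ?case by simp
  next
    case (Suc k)
    show ?case
    proof (cases "k = 0")
      case True then show ?thesis by simp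
    next
      case False
      then have "\<delta> k = \<delta> 1" using Suc by simp
      moreover have "\<delta> (Suc k - 1) = \<delta> (Suc k)" using step[of "Suc k"] False Suc.prems by simp
      ultimately show ?thesis by simp
    qed
  qed
  have "\<delta> j = 0" unfolding \<delta>_def using ij by simp
  then have z: "\<delta> k = 0" if "k \<in> {1..n}" for k using all[of k] all[of j] j that by simp
  show ?thesis
  proof (rule extensionalityI[of _ "{1..n}"])
    show "i \<in> extensional {1..n}" "i' \<in> extensional {1..n}" using i i' unfolding box_def by (auto simp: PiE_iff)
    fix k assume "k \<in> {1..n}" then show "i k = i' k" using z[of k] unfolding \<delta>_def by simp
  qed
qed


definition dd :: "(nat \<Rightarrow> nat) \<Rightarrow> nat \<Rightarrow> int" where "dd i k = int (i (pv n k)) - int (i k)"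

lemma E_dd: "E_blk n B i b = (\<Sum>k\<in>B b. dd i k)"
  unfolding E_blk_Ei Ei_def dd_def by simp

lemma UB:
  assumes j: "j \<in> {1..n}"
  shows "card {i \<in> Sol w N. i j = c} \<le> (2*N+1)^(n-r)"
proof -
  define C where "C = {1..n} - rep ` {1..r}"
  define \<Phi> where "\<Phi> i = restrict (dd i) C" for i
  let ?S = "{i \<in> Sol w N. i j = c}"
  have img: "\<Phi> ` ?S \<subseteq> C \<rightarrow>\<^sub>E {-int N..int N}"
  proof
    fix x assume "x \<in> \<Phi> ` ?S"
    then obtain i where i: "i \<in> ?S" and x: "x = \<Phi> i" by blast
    have ib: "i \<in> box N" using i unfolding Sol_def by simp
    have "dd i k \<in> {-int N..int N}" if "k \<in> C" for k
    proof -
      have k: "k \<in> {1..n}" using that unfolding C_def by simp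
      have "i k \<in> {1..N}" "i (pv n k) \<in> {1..N}" using ib k pv_range[OF k] unfolding box_def by auto
      then show ?thesis unfolding dd_def by auto
    qed
    then show "x \<in> C \<rightarrow>\<^sub>E {-int N..int N}" unfolding x \<Phi>_def by auto
  qed
  have inj: "inj_on \<Phi> ?S"
  proof (rule inj_onI)
    fix i i' assume i: "i \<in> ?S" and i': "i' \<in> ?S" and eq: "\<Phi> i = \<Phi> i'"
    have ib: "i \<in> box N" and i'b: "i' \<in> box N" using i i' unfolding Sol_def by auto
    have dC: "dd i k = dd i' k" if "k \<in> C" for k
      using fun_cong[OF eq, of k] that unfolding \<Phi>_def by simp
    have dall: "dd i k = dd i' k" if k: "k \<in> {1..n}" for k
    proof (cases "k \<in> C")
      case True then show ?thesis by (rule dC)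
    next
      case False
      then obtain b where b: "b \<in> {1..r}" and kb: "k = rep b" using k unfolding C_def by auto
      have kB: "k \<in> B b" using rep_in[OF b] kb by simp
      have rest: "(\<Sum>k'\<in>B b - {k}. dd i k') = (\<Sum>k'\<in>B b - {k}. dd i' k')"
      proof (rule sum.cong)
        fix k' assume k': "k' \<in> B b - {k}"
        have "k' \<in> C"
        proof -
          have "k' \<in> {1..n}" using k' sub[OF b] by auto
          moreover have "k' \<notin> rep ` {1..r}"
          proof
            assume "k' \<in> rep ` {1..r}"
            then obtain c where c: "c \<in> {1..r}" "k' = rep c" by auto
            then have "c = b" using rep_inB[OF b c(1)] k' by auto
            then show False using k' c kb by simp
          qed
          ultimately show ?thesis unfolding C_def by simp
        qed
        then show "dd i k' = dd i' k'" by (rule dC)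
      qed simp
      have "E_blk n B i b = w b" "E_blk n B i' b = w b" using i i' b unfolding Sol_def by auto
      then have "(\<Sum>k\<in>B b. dd i k) = (\<Sum>k\<in>B b. dd i' k)" unfolding E_dd by simp
      then have "dd i k + (\<Sum>k'\<in>B b - {k}. dd i k') = dd i' k + (\<Sum>k'\<in>B b - {k}. dd i' k')"
        using sum.remove[OF fin[OF b] kB, of "dd i"] sum.remove[OF fin[OF b] kB, of "dd i'"] by simp
      then show ?thesis using rest by simp
    qed
    show "i = i'"
      by (rule chain_eq[OF ib i'b j]) (use i i' dall in \<open>auto simp: dd_def\<close>)
  qed
  have "card ?S = card (\<Phi> ` ?S)" using inj by (simp add: card_image)
  also have "\<dots> \<le> card (C \<rightarrow>\<^sub>E {-int N..int N})"
    by (rule card_mono[OF _ img]) (simp add: finite_PiE C_def)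
  also have "\<dots> = (2*N+1)^(card C)"
    proof -
    have "nat (2 * int N + 1) = 2*N+1" by simp
    then show ?thesis by (simp add: card_PiE C_def)
  qed
  also have "card C = n - r"
  proof -
    have "rep ` {1..r} \<subseteq> {1..n}" using rep_range by auto
    then show ?thesis unfolding C_def using card_reps by (simp add: card_Diff_subset)
  qed
  finally show ?thesis .
qed


lemma SH:
  assumes ev: "\<forall>b\<in>{1..r}. Ei n B v b = w2 b - w1 b" and vb: "\<forall>k. \<bar>v k\<bar> \<le> int V"
  shows "card (Sol w1 N) \<le> card (Sol w2 N) + n * (2*V) * (2*N+1)^(n-r)"
proof -
  define inner where "inner = {i \<in> Sol w1 N. \<forall>j\<in>{1..n}. V < i j \<and> i j + V \<le> N}"
  define \<psi> where "\<psi> i = restrict (\<lambda>j. nat (int (i j) + v j)) {1..n}" for i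
  define L where "L = {1..V} \<union> {N-V<..N}"
  have img: "\<psi> ` inner \<subseteq> Sol w2 N"
  proof
    fix x assume "x \<in> \<psi> ` inner"
    then obtain i where i: "i \<in> inner" and x: "x = \<psi> i" by blast
    have ib: "i \<in> box N" and iE: "\<forall>b\<in>{1..r}. E_blk n B i b = w1 b" and
      ir: "\<forall>j\<in>{1..n}. V < i j \<and> i j + V \<le> N" using i unfolding inner_def Sol_def by auto
    have pos: "int (i j) + v j \<ge> 1" "int (i j) + v j \<le> int N" if "j \<in> {1..n}" for j
    proof -
      have "V < i j" "i j + V \<le> N" using ir that by auto
      then show "int (i j) + v j \<ge> 1" "int (i j) + v j \<le> int N" using vb[rule_format, of j] by linarith+
    qed
    have xb: "x \<in> box N" unfolding x \<psi>_def box_def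
    proof (rule restrict_PiE_iff[THEN iffD2], intro ballI)
      fix j assume j: "j \<in> {1..n}"
      show "nat (int (i j) + v j) \<in> {1..N}" using pos[OF j] by (simp add: nat_le_iff le_nat_iff)
    qed
    have "E_blk n B x b = w2 b" if b: "b \<in> {1..r}" for b
    proof -
      have "E_blk n B x b = Ei n B (\<lambda>j. int (i j) + v j) b"
        unfolding E_blk_Ei
      proof (rule Ei_cong)
        show "B b \<subseteq> {1..n}" by (rule sub[OF b])
        fix j assume j: "j \<in> {1..n}"
        show "int (x j) = int (i j) + v j" using pos[OF j] j by (simp add: x \<psi>_def)
      qed
      also have "\<dots> = Ei n B (\<lambda>j. int (i j)) b + Ei n B v b" by (rule Ei_add)
      also have "\<dots> = w2 b" using iE b ev unfolding E_blk_Ei by simp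
      finally show ?thesis .
    qed
    then show "x \<in> Sol w2 N" using xb unfolding Sol_def by simp
  qed
  have inj: "inj_on \<psi> inner"
  proof (rule inj_onI)
    fix i i' assume i: "i \<in> inner" and i': "i' \<in> inner" and eq: "\<psi> i = \<psi> i'"
    have ib: "i \<in> box N" and i'b: "i' \<in> box N" using i i' unfolding inner_def Sol_def by auto
    show "i = i'"
    proof (rule extensionalityI[of _ "{1..n}"])
      show "i \<in> extensional {1..n}" "i' \<in> extensional {1..n}" using ib i'b unfolding box_def by (auto simp: PiE_iff)
      fix j assume j: "j \<in> {1..n}"
      have "V < i j" "V < i' j" using i i' j unfolding inner_def by auto
      then have "int (i j) + v j \<ge> 0" "int (i' j) + v j \<ge> 0"
        using vb[rule_format, of j] by linarith+
      moreover have "nat (int (i j) + v j) = nat (int (i' j) + v j)" using fun_cong[OF eq, of j] j unfolding \<psi>_def by simp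
      ultimately show "i j = i' j" by simp
    qed
  qed
  have cov: "Sol w1 N \<subseteq> inner \<union> (\<Union>j\<in>{1..n}. \<Union>c\<in>L. {i \<in> Sol w1 N. i j = c})"
  proof
    fix i assume i: "i \<in> Sol w1 N"
    show "i \<in> inner \<union> (\<Union>j\<in>{1..n}. \<Union>c\<in>L. {i \<in> Sol w1 N. i j = c})"
    proof (cases "i \<in> inner")
      case False
      then obtain j where j: "j \<in> {1..n}" and h: "\<not> (V < i j \<and> i j + V \<le> N)" using i unfolding inner_def by auto
      have "i j \<in> {1..N}" using i j unfolding Sol_def box_def by auto
      then have "i j \<in> L" using h unfolding L_def by auto
      then show ?thesis using i j by blast
    qed simp
  qed
  have cL: "card L \<le> 2*V"
  proof -
    have "card L \<le> card {1..V} + card {N-V<..N}" unfolding L_def by (rule card_Un_le)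
    also have "\<dots> \<le> 2*V" by simp
    finally show ?thesis .
  qed
  have cU: "card (\<Union>j\<in>{1..n}. \<Union>c\<in>L. {i \<in> Sol w1 N. i j = c}) \<le> n * (2*V) * (2*N+1)^(n-r)"
  proof -
    have "card (\<Union>j\<in>{1..n}. \<Union>c\<in>L. {i \<in> Sol w1 N. i j = c}) \<le> (\<Sum>j\<in>{1..n}. card (\<Union>c\<in>L. {i \<in> Sol w1 N. i j = c}))"
      by (rule card_UN_le) simp
    also have "\<dots> \<le> (\<Sum>j\<in>{1..n}. (2*V) * (2*N+1)^(n-r))"
    proof (rule sum_mono)
      fix j assume j: "j \<in> {1..n}"
      have "card (\<Union>c\<in>L. {i \<in> Sol w1 N. i j = c}) \<le> (\<Sum>c\<in>L. card {i \<in> Sol w1 N. i j = c})"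
        by (rule card_UN_le) (simp add: L_def)
      also have "\<dots> \<le> (\<Sum>c\<in>L. (2*N+1)^(n-r))" by (rule sum_mono) (rule UB[OF j])
      also have "\<dots> = card L * (2*N+1)^(n-r)" by simp
      also have "\<dots> \<le> (2*V) * (2*N+1)^(n-r)" using cL by simp
      finally show "card (\<Union>c\<in>L. {i \<in> Sol w1 N. i j = c}) \<le> (2*V) * (2*N+1)^(n-r)" .
    qed
    also have "\<dots> = n * (2*V) * (2*N+1)^(n-r)" by simp
    finally show ?thesis .
  qed
  have "card (Sol w1 N) \<le> card (inner \<union> (\<Union>j\<in>{1..n}. \<Union>c\<in>L. {i \<in> Sol w1 N. i j = c}))"
  proof (rule card_mono[OF _ cov])
    have "inner \<union> (\<Union>j\<in>{1..n}. \<Union>c\<in>L. {i \<in> Sol w1 N. i j = c}) \<subseteq> Sol w1 N" unfolding inner_def by auto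
    then show "finite (inner \<union> (\<Union>j\<in>{1..n}. \<Union>c\<in>L. {i \<in> Sol w1 N. i j = c}))"
      using finite_Sol finite_subset by blast
  qed
  also have "\<dots> \<le> card inner + card (\<Union>j\<in>{1..n}. \<Union>c\<in>L. {i \<in> Sol w1 N. i j = c})" by (rule card_Un_le)
  also have "card inner \<le> card (Sol w2 N)"
    using card_inj_on_le[OF inj img finite_Sol] .
  finally show ?thesis using cU by linarith
qed


lemma DF:
  assumes sw: "(\<Sum>b\<in>{1..r}. w b) = 0" and wb: "\<forall>b\<in>{1..r}. \<bar>w b\<bar> \<le> int M"
  shows "\<bar>real (card (Sol w N)) - real (card (Sol (\<lambda>_. 0) N))\<bar> \<le> real (n * (2*(r*M)) * (2*N+1)^(n-r))"
proof -
  obtain v where ev: "\<forall>b\<in>{1..r}. Ei n B v b = w b" and vb0: "\<forall>k. \<bar>v k\<bar> \<le> (\<Sum>b\<in>{1..r}. \<bar>w b\<bar>)"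
    using preimage[OF sw] by blast
  have "(\<Sum>b\<in>{1..r}. \<bar>w b\<bar>) \<le> (\<Sum>b\<in>{1..r}. int M)" by (rule sum_mono) (use wb in auto)
  then have vb: "\<forall>k. \<bar>v k\<bar> \<le> int (r*M)" using vb0 by (auto intro: order_trans)
  have vb': "\<forall>k. \<bar>- v k\<bar> \<le> int (r*M)" using vb by simp
  have ev1: "\<forall>b\<in>{1..r}. Ei n B v b = w b - (\<lambda>_. 0) b" using ev by simp
  have ev2: "\<forall>b\<in>{1..r}. Ei n B (\<lambda>j. - v j) b = (\<lambda>_. 0) b - w b" using ev by (simp add: Ei_neg)
  have 1: "card (Sol (\<lambda>_. 0) N) \<le> card (Sol w N) + n * (2*(r*M)) * (2*N+1)^(n-r)"
    by (rule SH[OF ev1 vb])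
  have 2: "card (Sol w N) \<le> card (Sol (\<lambda>_. 0) N) + n * (2*(r*M)) * (2*N+1)^(n-r)"
    by (rule SH[OF ev2 vb'])
  show ?thesis using 1 2 by (simp only: abs_le_iff) linarith
qed

definition Tset :: "nat \<Rightarrow> (nat \<Rightarrow> nat) set" where
  "Tset k = {t \<in> box k. \<forall>b\<in>{1..r}. int k dvd E_blk n B t b}"
definition wt :: "nat \<Rightarrow> (nat \<Rightarrow> nat) \<Rightarrow> nat \<Rightarrow> int" where
  "wt k t = (\<lambda>b. - (E_blk n B t b div int k))"

lemma divmod_unique:
  fixes k a a' s s' :: nat
  assumes "k * a + s = k * a' + s'" "s < k" "s' < k"
  shows "a = a' \<and> s = s'"
proof -
  have "a = (k * a + s) div k" using assms(2) by simp
  also have "\<dots> = (k * a' + s') div k" using assms(1) by simp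
  also have "\<dots> = a'" using assms(3) by simp
  finally have 1: "a = a'" .
  have "s = (k * a + s) mod k" using assms(2) by simp
  also have "\<dots> = (k * a' + s') mod k" using assms(1) by simp
  also have "\<dots> = s'" using assms(3) by simp
  finally show ?thesis using 1 by simp
qed

lemma BD:
  assumes k: "k \<ge> 1"
  shows "card (Sol (\<lambda>_. 0) (k*N)) = (\<Sum>t\<in>Tset k. card (Sol (wt k t) N))"
proof -
  define comb where "comb p = restrict (\<lambda>j. k * (snd p j - 1) + fst p j) {1..n}" for p :: "(nat \<Rightarrow> nat) \<times> (nat \<Rightarrow> nat)"
  define D where "D = Sigma (Tset k) (\<lambda>t. Sol (wt k t) N)"
  have Ecomb: "E_blk n B (comb (t, g)) b = int k * E_blk n B g b + E_blk n B t b"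
    if tb: "t \<in> box k" and gb: "g \<in> box N" and b: "b \<in> {1..r}" for t g b
  proof -
    have "E_blk n B (comb (t, g)) b = Ei n B (\<lambda>j. int k * (int (g j) - 1) + int (t j)) b"
      unfolding E_blk_Ei
    proof (rule Ei_cong)
      show "B b \<subseteq> {1..n}" by (rule sub[OF b])
      fix j assume j: "j \<in> {1..n}"
      have "g j \<ge> 1" using gb j unfolding box_def by auto
      then show "int (comb (t, g) j) = int k * (int (g j) - 1) + int (t j)" using j
        by (simp add: comb_def of_nat_diff)
    qed
    also have "\<dots> = int k * E_blk n B g b + E_blk n B t b" unfolding E_blk_Ei by (rule Ei_lin2)
    finally show ?thesis .
  qed
  have img: "comb ` D = Sol (\<lambda>_. 0) (k*N)"
  proof
    show "comb ` D \<subseteq> Sol (\<lambda>_. 0) (k*N)"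
    proof
      fix x assume "x \<in> comb ` D"
      then obtain t g where tT: "t \<in> Tset k" and gS: "g \<in> Sol (wt k t) N" and x: "x = comb (t, g)"
        unfolding D_def by auto
      have tb: "t \<in> box k" and gb: "g \<in> box N" using tT gS unfolding Tset_def Sol_def by auto
      have xb: "x \<in> box (k*N)" unfolding x comb_def box_def
      proof (rule restrict_PiE_iff[THEN iffD2], intro ballI)
        fix j assume j: "j \<in> {1..n}"
        have "t j \<in> {1..k}" "g j \<in> {1..N}" using tb gb j unfolding box_def by auto
        then have "k * (g j - 1) + t j \<le> k * (N - 1) + k" by (intro add_mono mult_left_mono) auto
        also have "\<dots> = k * N" using \<open>g j \<in> {1..N}\<close> by (cases N) (auto simp: algebra_simps)
        finally show "k * (snd (t, g) j - 1) + fst (t, g) j \<in> {1..k*N}" using \<open>t j \<in> {1..k}\<close> by simp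
      qed
      have "E_blk n B x b = 0" if b: "b \<in> {1..r}" for b
      proof -
        have dv: "int k dvd E_blk n B t b" using tT b unfolding Tset_def by auto
        have "E_blk n B g b = - (E_blk n B t b div int k)" using gS b unfolding Sol_def wt_def by auto
        then show ?thesis unfolding x Ecomb[OF tb gb b] using dv by simp
      qed
      then show "x \<in> Sol (\<lambda>_. 0) (k*N)" using xb unfolding Sol_def by simp
    qed
    show "Sol (\<lambda>_. 0) (k*N) \<subseteq> comb ` D"
    proof
      fix i assume iS: "i \<in> Sol (\<lambda>_. 0) (k*N)"
      have ib: "i \<in> box (k*N)" using iS unfolding Sol_def by simp
      define t where "t = restrict (\<lambda>j. (i j - 1) mod k + 1) {1..n}"
      define g where "g = restrict (\<lambda>j. (i j - 1) div k + 1) {1..n}"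
      have tb: "t \<in> box k" unfolding t_def box_def
        by (rule restrict_PiE_iff[THEN iffD2]) (use k in \<open>auto simp: Suc_le_eq\<close>)
      have gb: "g \<in> box N" unfolding g_def box_def
      proof (rule restrict_PiE_iff[THEN iffD2], intro ballI)
        fix j assume j: "j \<in> {1..n}"
        have "i j \<in> {1..k*N}" using ib j unfolding box_def by auto
        then have "1 \<le> i j" "i j \<le> N * k" by (auto simp: mult.commute)
        then have "i j - 1 < N * k" by arith
        then have "(i j - 1) div k < N" by (rule less_mult_imp_div_less)
        then show "(i j - 1) div k + 1 \<in> {1..N}" by simp
      qed
      have ci: "comb (t, g) = i"
      proof (rule extensionalityI[of _ "{1..n}"])
        show "comb (t, g) \<in> extensional {1..n}" unfolding comb_def by simp
        show "i \<in> extensional {1..n}" using ib unfolding box_def by (auto simp: PiE_iff)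
        fix j assume j: "j \<in> {1..n}"
        have "i j \<ge> 1" using ib j unfolding box_def by auto
        then show "comb (t, g) j = i j" using j unfolding comb_def t_def g_def
          by simp
      qed
      have "E_blk n B t b = - (int k * E_blk n B g b)" if b: "b \<in> {1..r}" for b
        using Ecomb[OF tb gb b] iS b ci unfolding Sol_def by auto
      note Et = this
      have kz: "int k \<noteq> 0" using k by simp
      have tT: "t \<in> Tset k" using tb Et unfolding Tset_def by auto
      have gS: "g \<in> Sol (wt k t) N" using gb Et kz unfolding Sol_def wt_def
        by (auto simp del: mult_minus_right simp add: mult_minus_right[symmetric])
      show "i \<in> comb ` D" unfolding D_def using tT gS ci by (intro image_eqI[of _ _ "(t, g)"]) auto
    qed
  qed
  have inj: "inj_on comb D"
  proof (rule inj_onI)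
    fix p p' assume p: "p \<in> D" and p': "p' \<in> D" and eq: "comb p = comb p'"
    obtain t g where pp: "p = (t, g)" by (cases p)
    obtain t' g' where pp': "p' = (t', g')" by (cases p')
    have tb: "t \<in> box k" "t' \<in> box k" and gb: "g \<in> box N" "g' \<in> box N"
      using p p' unfolding pp pp' D_def Tset_def Sol_def by auto
    have both: "t j = t' j \<and> g j = g' j" if j: "j \<in> {1..n}" for j
    proof -
      have "k * (g j - 1) + t j = k * (g' j - 1) + t' j" using fun_cong[OF eq, of j] j unfolding pp pp' comb_def by simp
      moreover have "t j \<in> {1..k}" "t' j \<in> {1..k}" "g j \<in> {1..N}" "g' j \<in> {1..N}" using tb gb j unfolding box_def by auto
      ultimately have "k * (g j - 1) + (t j - 1) = k * (g' j - 1) + (t' j - 1)" by simp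
      moreover have "t j - 1 < k" "t' j - 1 < k" using \<open>t j \<in> {1..k}\<close> \<open>t' j \<in> {1..k}\<close> by auto
      ultimately have "g j - 1 = g' j - 1 \<and> t j - 1 = t' j - 1" by (rule divmod_unique)
      then show ?thesis using \<open>t j \<in> {1..k}\<close> \<open>t' j \<in> {1..k}\<close> \<open>g j \<in> {1..N}\<close> \<open>g' j \<in> {1..N}\<close> by auto
    qed
    have "t = t'" by (rule extensionalityI[of _ "{1..n}"]) (use tb both in \<open>auto simp: box_def PiE_iff\<close>)
    moreover have "g = g'" by (rule extensionalityI[of _ "{1..n}"]) (use gb both in \<open>auto simp: box_def PiE_iff\<close>)
    ultimately show "p = p'" unfolding pp pp' by simp
  qed
  have "card (Sol (\<lambda>_. 0) (k*N)) = card D" using img inj card_image by fastforce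
  also have "\<dots> = (\<Sum>t\<in>Tset k. card (Sol (wt k t) N))" unfolding D_def
    by (rule card_SigmaI) (auto simp: Tset_def finite_box finite_Sol)
  finally show ?thesis .
qed


definition sh :: "nat \<Rightarrow> (nat \<Rightarrow> int) \<Rightarrow> (nat \<Rightarrow> nat) \<Rightarrow> nat \<Rightarrow> nat" where
  "sh k v t = restrict (\<lambda>j. nat ((int (t j) - 1 + v j) mod int k) + 1) {1..n}"

lemma sh_box: "k \<ge> 1 \<Longrightarrow> sh k v t \<in> box k"
  unfolding sh_def box_def
proof (rule restrict_PiE_iff[THEN iffD2], intro ballI)
  fix j assume k: "k \<ge> 1"
  have "(int (t j) - 1 + v j) mod int k < int k" using k by simp
  moreover have "(int (t j) - 1 + v j) mod int k \<ge> 0" using k by simp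
  ultimately show "nat ((int (t j) - 1 + v j) mod int k) + 1 \<in> {1..k}" by auto
qed

lemma sh_E:
  assumes k: "k \<ge> 1" and b: "b \<in> {1..r}"
  shows "E_blk n B (sh k v t) b mod int k = (E_blk n B t b + Ei n B v b) mod int k"
proof -
  define q where "q j = (int (t j) - 1 + v j) div int k" for j
  have "E_blk n B (sh k v t) b = Ei n B (\<lambda>j. (- int k) * q j + (int (t j) + v j)) b"
    unfolding E_blk_Ei
  proof (rule Ei_cong)
    show "B b \<subseteq> {1..n}" by (rule sub[OF b])
    fix j assume j: "j \<in> {1..n}"
    have nn: "(int (t j) - 1 + v j) mod int k \<ge> 0" using k by simp
    have "int (sh k v t j) = (int (t j) - 1 + v j) mod int k + 1" using j nn unfolding sh_def by simp
    also have "\<dots> = (int (t j) - 1 + v j) - int k * q j + 1" unfolding q_def by (simp add: mod_div_mult_eq[symmetric] algebra_simps)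
    finally show "int (sh k v t j) = (- int k) * q j + (int (t j) + v j)" by simp
  qed
  also have "\<dots> = (- int k) * Ei n B q b + (E_blk n B t b + Ei n B v b)"
    unfolding Ei_lin Ei_add E_blk_Ei by simp
  finally have "E_blk n B (sh k v t) b = (E_blk n B t b + Ei n B v b) - int k * Ei n B q b" by simp
  then show ?thesis by (simp add: mod_diff_right_eq[symmetric])
qed

lemma sh_inj: "k \<ge> 1 \<Longrightarrow> inj_on (sh k v) (box k)"
proof (rule inj_onI)
  fix t t' assume k: "k \<ge> 1" and t: "t \<in> box k" and t': "t' \<in> box k" and eq: "sh k v t = sh k v t'"
  show "t = t'"
  proof (rule extensionalityI[of _ "{1..n}"])
    show "t \<in> extensional {1..n}" "t' \<in> extensional {1..n}" using t t' unfolding box_def by (auto simp: PiE_iff)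
    fix j assume j: "j \<in> {1..n}"
    have "nat ((int (t j) - 1 + v j) mod int k) = nat ((int (t' j) - 1 + v j) mod int k)"
      using fun_cong[OF eq, of j] j unfolding sh_def by simp
    moreover have "(int (t j) - 1 + v j) mod int k \<ge> 0" "(int (t' j) - 1 + v j) mod int k \<ge> 0" using k by simp_all
    ultimately have "(int (t j) - 1 + v j) mod int k = (int (t' j) - 1 + v j) mod int k" by (simp add: eq_nat_nat_iff)
    then have "(int (t j) - 1) mod int k = (int (t' j) - 1) mod int k"
      by (metis add_diff_cancel_right' mod_diff_left_eq)
    moreover have "t j \<in> {1..k}" "t' j \<in> {1..k}" using t t' j unfolding box_def by auto
    ultimately show "t j = t' j" by (simp add: of_nat_diff)
  qed
qed


definition fiber :: "nat \<Rightarrow> (nat \<Rightarrow> int) \<Rightarrow> (nat \<Rightarrow> nat) set" where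
  "fiber k u = {t \<in> box k. \<forall>b\<in>{2..r}. E_blk n B t b mod int k = u b}"

lemma E1_split: "E_blk n B t 1 = - (\<Sum>b\<in>{2..r}. E_blk n B t b)"
proof -
  have "{1..r} = insert 1 {2..r}" using r_pos by auto
  then have "(\<Sum>b\<in>{1..r}. Ei n B (\<lambda>j. int (t j)) b) = Ei n B (\<lambda>j. int (t j)) 1 + (\<Sum>b\<in>{2..r}. Ei n B (\<lambda>j. int (t j)) b)"
    by simp
  then show ?thesis using sum_Ei[of "\<lambda>j. int (t j)"] unfolding E_blk_Ei by simp
qed

lemma fiber0: assumes k: "k \<ge> 1" shows "fiber k (\<lambda>_. 0) = Tset k"
proof
  show "Tset k \<subseteq> fiber k (\<lambda>_. 0)"
  proof
    fix t assume t: "t \<in> Tset k"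
    have "E_blk n B t b mod int k = 0" if b: "b \<in> {2..r}" for b
    proof -
      have "b \<in> {1..r}" using b by auto
      then have "int k dvd E_blk n B t b" using t unfolding Tset_def by blast
      then show ?thesis by simp
    qed
    then show "t \<in> fiber k (\<lambda>_. 0)" using t unfolding Tset_def fiber_def by blast
  qed
  show "fiber k (\<lambda>_. 0) \<subseteq> Tset k"
  proof
    fix t assume t: "t \<in> fiber k (\<lambda>_. 0)"
    have d: "\<forall>b\<in>{2..r}. int k dvd E_blk n B t b"
    proof
      fix b assume "b \<in> {2..r}"
      then have "E_blk n B t b mod int k = 0" using t unfolding fiber_def by blast
      then show "int k dvd E_blk n B t b" by (simp add: dvd_eq_mod_eq_0)
    qed
    then have "int k dvd (\<Sum>b\<in>{2..r}. E_blk n B t b)" by (intro dvd_sum) auto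
    then have "int k dvd E_blk n B t 1" unfolding E1_split by simp
    then have "\<forall>b\<in>{1..r}. int k dvd E_blk n B t b"
    proof (intro ballI)
      fix b assume h: "int k dvd E_blk n B t 1" and b: "b \<in> {1..r}"
      show "int k dvd E_blk n B t b"
      proof (cases "b = 1")
        case True then show ?thesis using h by simp
      next
        case False then have "b \<in> {2..r}" using b by auto
        then show ?thesis using d by blast
      qed
    qed
    then show "t \<in> Tset k" using t unfolding Tset_def fiber_def by simp
  qed
qed

lemma fiber_card:
  assumes k: "k \<ge> 1" and u: "u \<in> {2..r} \<rightarrow>\<^sub>E {0..<int k}"
  shows "card (fiber k (restrict u {2..r})) = card (fiber k (\<lambda>_. 0))"
proof -
  define w where "w b = (if b = 1 then - (\<Sum>c\<in>{2..r}. u c) else u b)" for b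
  have sw: "(\<Sum>b\<in>{1..r}. w b) = 0"
  proof -
    have "{1..r} = insert 1 {2..r}" using r_pos by auto
    then have "(\<Sum>b\<in>{1..r}. w b) = w 1 + (\<Sum>b\<in>{2..r}. w b)" by simp
    also have "(\<Sum>b\<in>{2..r}. w b) = (\<Sum>b\<in>{2..r}. u b)" by (rule sum.cong) (auto simp: w_def)
    finally show ?thesis by (simp add: w_def)
  qed
  obtain v where ev: "\<forall>b\<in>{1..r}. Ei n B v b = w b" using preimage[OF sw] by blast
  have ub: "u b \<in> {0..<int k}" if "b \<in> {2..r}" for b using u that by auto
  have "card (fiber k (\<lambda>_. 0)) \<le> card (fiber k (restrict u {2..r}))"
  proof (rule card_inj_on_le)
    show "inj_on (sh k v) (fiber k (\<lambda>_. 0))" by (rule inj_on_subset[OF sh_inj[OF k]]) (auto simp: fiber_def)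
    show "finite (fiber k (restrict u {2..r}))" unfolding fiber_def using finite_box by simp
    show "sh k v ` fiber k (\<lambda>_. 0) \<subseteq> fiber k (restrict u {2..r})"
    proof
      fix x assume "x \<in> sh k v ` fiber k (\<lambda>_. 0)"
      then obtain t where t: "t \<in> fiber k (\<lambda>_. 0)" and x: "x = sh k v t" by blast
      have "E_blk n B x b mod int k = u b" if b: "b \<in> {2..r}" for b
      proof -
        have b1: "b \<in> {1..r}" "b \<noteq> 1" using b by auto
        have "E_blk n B x b mod int k = (E_blk n B t b + u b) mod int k"
          unfolding x using sh_E[OF k b1(1)] ev b1 by (simp add: w_def)
        also have "\<dots> = (E_blk n B t b mod int k + u b) mod int k" by (simp add: mod_add_left_eq)
        also have "\<dots> = u b" using t b ub[OF b] unfolding fiber_def by simp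
        finally show ?thesis .
      qed
      then show "x \<in> fiber k (restrict u {2..r})" unfolding fiber_def using sh_box[OF k] x by simp
    qed
  qed
  moreover have "card (fiber k (restrict u {2..r})) \<le> card (fiber k (\<lambda>_. 0))"
  proof (rule card_inj_on_le)
    show "inj_on (sh k (\<lambda>j. - v j)) (fiber k (restrict u {2..r}))" by (rule inj_on_subset[OF sh_inj[OF k]]) (auto simp: fiber_def)
    show "finite (fiber k (\<lambda>_. 0))" unfolding fiber_def using finite_box by simp
    show "sh k (\<lambda>j. - v j) ` fiber k (restrict u {2..r}) \<subseteq> fiber k (\<lambda>_. 0)"
    proof
      fix x assume "x \<in> sh k (\<lambda>j. - v j) ` fiber k (restrict u {2..r})"
      then obtain t where t: "t \<in> fiber k (restrict u {2..r})" and x: "x = sh k (\<lambda>j. - v j) t" by blast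
      have "E_blk n B x b mod int k = 0" if b: "b \<in> {2..r}" for b
      proof -
        have b1: "b \<in> {1..r}" "b \<noteq> 1" using b by auto
        have "E_blk n B x b mod int k = (E_blk n B t b - u b) mod int k"
          unfolding x using sh_E[OF k b1(1)] ev b1 by (simp add: w_def Ei_neg)
        also have "\<dots> = (E_blk n B t b mod int k - u b) mod int k" by (simp add: mod_diff_left_eq)
        also have "\<dots> = 0" using t b unfolding fiber_def by simp
        finally show ?thesis .
      qed
      then show "x \<in> fiber k (\<lambda>_. 0)" unfolding fiber_def using sh_box[OF k] x by simp
    qed
  qed
  ultimately show ?thesis by simp
qed

lemma TC:
  assumes k: "k \<ge> 1"
  shows "card (Tset k) = k^(n-r+1)"
proof -
  define U where "U = {2..r} \<rightarrow>\<^sub>E {0..<int k}"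
  have finU: "finite U" unfolding U_def by (simp add: finite_PiE)
  have cover: "box k = (\<Union>u\<in>U. fiber k u)"
  proof
    show "(\<Union>u\<in>U. fiber k u) \<subseteq> box k" unfolding fiber_def by blast
    show "box k \<subseteq> (\<Union>u\<in>U. fiber k u)"
    proof
      fix t assume t: "t \<in> box k"
      define u where "u = restrict (\<lambda>b. E_blk n B t b mod int k) {2..r}"
      have "u \<in> U" unfolding U_def u_def
      proof (rule restrict_PiE_iff[THEN iffD2], intro ballI)
        fix b show "E_blk n B t b mod int k \<in> {0..<int k}" using k by simp
      qed
      moreover have "t \<in> fiber k u" unfolding fiber_def u_def using t by simp
      ultimately show "t \<in> (\<Union>u\<in>U. fiber k u)" by blast
    qed
  qed
  have disj: "\<forall>u\<in>U. \<forall>u'\<in>U. u \<noteq> u' \<longrightarrow> fiber k u \<inter> fiber k u' = {}"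
  proof (intro ballI impI)
    fix u u' assume u: "u \<in> U" and u': "u' \<in> U" and ne: "u \<noteq> u'"
    show "fiber k u \<inter> fiber k u' = {}"
    proof (rule ccontr)
      assume "fiber k u \<inter> fiber k u' \<noteq> {}"
      then obtain t where "t \<in> fiber k u" "t \<in> fiber k u'" by blast
      then have "\<forall>b\<in>{2..r}. u b = u' b" unfolding fiber_def by auto
      then have "u = u'" using u u' unfolding U_def by (intro extensionalityI[of _ "{2..r}"]) (auto simp: PiE_iff)
      then show False using ne by simp
    qed
  qed
  have "k^n = card (box k)" unfolding box_def by (simp add: card_PiE)
  also have "\<dots> = (\<Sum>u\<in>U. card (fiber k u))" unfolding cover
    by (rule card_UN_disjoint[OF finU _ disj]) (auto simp: fiber_def finite_box)
  also have "\<dots> = (\<Sum>u\<in>U. card (Tset k))"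
  proof (rule sum.cong)
    fix u assume u: "u \<in> U"
    then have "restrict u {2..r} = u" unfolding U_def by (simp add: PiE_iff extensional_restrict)
    then show "card (fiber k u) = card (Tset k)" using fiber_card[OF k, of u] u fiber0[OF k] unfolding U_def by simp
  qed simp
  also have "\<dots> = k^(r-1) * card (Tset k)" unfolding U_def by (simp add: card_PiE)
  finally have eq: "k^n = k^(r-1) * card (Tset k)" .
  have e: "n = (r-1) + (n-r+1)" using r_pos r_le_n by simp
  have "k^n = k^(r-1) * k^(n-r+1)" by (subst e) (rule power_add)
  then have "k^(r-1) * card (Tset k) = k^(r-1) * k^(n-r+1)" using eq by simp
  moreover have "k^(r-1) \<noteq> 0" using k by simp
  ultimately show ?thesis by (metis mult_left_cancel)
qed


lemma E_bound:
  assumes t: "t \<in> box k" and b: "b \<in> {1..r}"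
  shows "\<bar>E_blk n B t b\<bar> \<le> int n * int k"
proof -
  have "\<bar>E_blk n B t b\<bar> \<le> (\<Sum>j\<in>B b. \<bar>dd t j\<bar>)" unfolding E_dd by (rule sum_abs)
  also have "\<dots> \<le> (\<Sum>j\<in>B b. int k)"
  proof (rule sum_mono)
    fix j assume "j \<in> B b"
    then have j: "j \<in> {1..n}" using sub[OF b] by blast
    have "t j \<in> {1..k}" "t (pv n j) \<in> {1..k}" using t j pv_range[OF j] unfolding box_def by auto
    then show "\<bar>dd t j\<bar> \<le> int k" unfolding dd_def by auto
  qed
  also have "\<dots> = int (card (B b)) * int k" by simp
  also have "\<dots> \<le> int n * int k"
  proof -
    have "card (B b) \<le> card {1..n}" by (rule card_mono) (use sub[OF b] in auto)
    then show ?thesis by (intro mult_right_mono) auto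
  qed
  finally show ?thesis .
qed

lemma wt_props:
  assumes k: "k \<ge> 1" and t: "t \<in> Tset k"
  shows "(\<Sum>b\<in>{1..r}. wt k t b) = 0" "\<forall>b\<in>{1..r}. \<bar>wt k t b\<bar> \<le> int n"
proof -
  have tb: "t \<in> box k" using t unfolding Tset_def by simp
  have kw: "int k * wt k t b = - E_blk n B t b" if b: "b \<in> {1..r}" for b
  proof -
    have "int k dvd E_blk n B t b" using t b unfolding Tset_def by blast
    then show ?thesis unfolding wt_def by simp
  qed
  have "int k * (\<Sum>b\<in>{1..r}. wt k t b) = (\<Sum>b\<in>{1..r}. - E_blk n B t b)"
    unfolding sum_distrib_left by (rule sum.cong) (use kw in auto)
  also have "\<dots> = - (\<Sum>b\<in>{1..r}. Ei n B (\<lambda>j. int (t j)) b)" unfolding E_blk_Ei by (simp add: sum_negf)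
  also have "\<dots> = 0" using sum_Ei by simp
  finally show "(\<Sum>b\<in>{1..r}. wt k t b) = 0" using k by simp
  show "\<forall>b\<in>{1..r}. \<bar>wt k t b\<bar> \<le> int n"
  proof
    fix b assume b: "b \<in> {1..r}"
    have "\<bar>int k * wt k t b\<bar> = \<bar>E_blk n B t b\<bar>" using kw[OF b] by simp
    then have "int k * \<bar>wt k t b\<bar> = \<bar>E_blk n B t b\<bar>" by (simp add: abs_mult)
    also have "\<dots> \<le> int k * int n" using E_bound[OF tb b] by (simp add: mult.commute)
    finally show "\<bar>wt k t b\<bar> \<le> int n" using k by simp
  qed
qed

definition aa :: "nat \<Rightarrow> real" where "aa N = real (card (Sol (\<lambda>_. 0) N))"

definition Cc :: real where "Cc = real (n * (2*(r*n)) * 3^(n-r))"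

lemma pow_bound: "N \<ge> 1 \<Longrightarrow> real ((2*N+1)^(n-r)) \<le> 3^(n-r) * real N^(n-r)"
proof -
  assume N: "N \<ge> 1"
  have "real (2*N+1) \<le> 3 * real N" using N by simp
  then have "real (2*N+1)^(n-r) \<le> (3 * real N)^(n-r)" by (intro power_mono) auto
  then show ?thesis by (simp add: power_mult_distrib)
qed

lemma DFr:
  assumes sw: "(\<Sum>b\<in>{1..r}. w b) = 0" and wb: "\<forall>b\<in>{1..r}. \<bar>w b\<bar> \<le> int M" and N: "N \<ge> 1"
  shows "\<bar>real (card (Sol w N)) - aa N\<bar> \<le> real (n * (2*(r*M))) * 3^(n-r) * real N^(n-r)"
proof -
  have "\<bar>real (card (Sol w N)) - aa N\<bar> \<le> real (n * (2*(r*M)) * (2*N+1)^(n-r))"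
    using DF[OF sw wb] unfolding aa_def .
  also have "\<dots> = real (n * (2*(r*M))) * real ((2*N+1)^(n-r))" by simp
  also have "\<dots> \<le> real (n * (2*(r*M))) * (3^(n-r) * real N^(n-r))"
    by (intro mult_left_mono pow_bound[OF N]) auto
  finally show ?thesis by simp
qed

lemma SCALE:
  assumes k: "k \<ge> 1" and N: "N \<ge> 1"
  shows "\<bar>aa (k*N) - real k^(n-r+1) * aa N\<bar> \<le> real k^(n-r+1) * Cc * real N^(n-r)"
proof -
  have "aa (k*N) = (\<Sum>t\<in>Tset k. real (card (Sol (wt k t) N)))" unfolding aa_def BD[OF k] by simp
  moreover have "real k^(n-r+1) * aa N = (\<Sum>t\<in>Tset k. aa N)" using TC[OF k] by simp
  ultimately have "aa (k*N) - real k^(n-r+1) * aa N = (\<Sum>t\<in>Tset k. real (card (Sol (wt k t) N)) - aa N)"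
    by (simp add: sum_subtractf)
  then have "\<bar>aa (k*N) - real k^(n-r+1) * aa N\<bar> \<le> (\<Sum>t\<in>Tset k. \<bar>real (card (Sol (wt k t) N)) - aa N\<bar>)"
    by (simp add: sum_abs)
  also have "\<dots> \<le> (\<Sum>t\<in>Tset k. Cc * real N^(n-r))"
  proof (rule sum_mono)
    fix t assume t: "t \<in> Tset k"
    show "\<bar>real (card (Sol (wt k t) N)) - aa N\<bar> \<le> Cc * real N^(n-r)"
      using DFr[OF wt_props(1)[OF k t] wt_props(2)[OF k t] N] unfolding Cc_def by simp
  qed
  also have "\<dots> = real k^(n-r+1) * Cc * real N^(n-r)" using TC[OF k] by simp
  finally show ?thesis .
qed

lemma G0_eq: "N \<ge> 1 \<Longrightarrow> G_fun n r B N (\<lambda>_. 0) = aa N / real N^(n-r+1)"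
proof -
  assume N: "N \<ge> 1"
  have e: "n + 1 = r + (n-r+1)" using r_le_n by simp
  have "real N^(n+1) = real N^r * real N^(n-r+1)" by (subst e) (rule power_add)
  then show ?thesis unfolding G_fun_def aa_def S_Sol using N by simp
qed

lemma x_step:
  assumes k: "k \<ge> 1" and N: "N \<ge> 1"
  shows "\<bar>G_fun n r B (k*N) (\<lambda>_. 0) - G_fun n r B N (\<lambda>_. 0)\<bar> \<le> Cc / real N"
proof -
  define e where "e = n-r+1"
  have e1: "e = Suc (n-r)" unfolding e_def by simp
  have kN: "k*N \<ge> 1" using k N by simp
  have pos: "real k^e > 0" "real N^e > 0" using k N by auto
  have "G_fun n r B (k*N) (\<lambda>_. 0) - G_fun n r B N (\<lambda>_. 0) = aa (k*N) / (real k^e * real N^e) - aa N / real N^e"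
    unfolding G0_eq[OF kN] G0_eq[OF N] e_def by (simp add: power_mult_distrib)
  also have "\<dots> = (aa (k*N) - real k^e * aa N) / (real k^e * real N^e)"
  proof -
    have kz: "real k^e \<noteq> 0" using pos by linarith
    have "aa N / real N^e = (real k^e * aa N) / (real k^e * real N^e)"
      by (rule mult_divide_mult_cancel_left[symmetric, OF kz])
    then show ?thesis by (simp only: diff_divide_distrib)
  qed
  finally have "\<bar>G_fun n r B (k*N) (\<lambda>_. 0) - G_fun n r B N (\<lambda>_. 0)\<bar> = \<bar>aa (k*N) - real k^e * aa N\<bar> / (real k^e * real N^e)"
    using pos by simp
  also have "\<dots> \<le> (real k^e * Cc * real N^(n-r)) / (real k^e * real N^e)"
    by (rule divide_right_mono) (use SCALE[OF k N] pos in \<open>simp_all add: e_def\<close>)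
  also have "\<dots> = Cc / real N" using pos N k unfolding e1 by (simp add: field_simps)
  finally show ?thesis .
qed


lemma G_eq: "N \<ge> 1 \<Longrightarrow> G_fun n r B N w = real (card (Sol w N)) / real N^(n-r+1)"
proof -
  assume N: "N \<ge> 1"
  have e: "n + 1 = r + (n-r+1)" using r_le_n by simp
  have "real N^(n+1) = real N^r * real N^(n-r+1)" by (subst e) (rule power_add)
  then show ?thesis unfolding G_fun_def S_Sol using N by simp
qed

lemma Cc_nonneg: "Cc \<ge> 0" unfolding Cc_def by simp

lemma G0_conv: "convergent (\<lambda>N. G_fun n r B N (\<lambda>_. 0))"
proof -
  let ?x = "\<lambda>N. G_fun n r B N (\<lambda>_. 0)"
  have "Cauchy ?x"
  proof (rule metric_CauchyI)
    fix e :: real assume e: "0 < e"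
    define M where "M = nat (ceiling (2 * Cc / e)) + 1"
    have M1: "M \<ge> 1" unfolding M_def by simp
    have "2 * Cc / e \<le> real (nat (ceiling (2 * Cc / e)))" by linarith
    then have "2 * Cc / e < real M" unfolding M_def by simp
    then have MC: "2 * Cc < e * real M" using e by (simp add: field_simps)
    show "\<exists>M. \<forall>p\<ge>M. \<forall>q\<ge>M. dist (?x p) (?x q) < e"
    proof (intro exI allI impI)
      fix p q assume p: "p \<ge> M" and q: "q \<ge> M"
      have p1: "p \<ge> 1" and q1: "q \<ge> 1" using p q M1 by auto
      have 1: "\<bar>?x (q*p) - ?x p\<bar> \<le> Cc / real p" by (rule x_step[OF q1 p1])
      have 2: "\<bar>?x (p*q) - ?x q\<bar> \<le> Cc / real q" by (rule x_step[OF p1 q1])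
      have "Cc / real p \<le> Cc / real M" using p M1 Cc_nonneg by (intro divide_left_mono) auto
      moreover have "Cc / real q \<le> Cc / real M" using q M1 Cc_nonneg by (intro divide_left_mono) auto
      moreover have "2 * (Cc / real M) < e" using MC M1 by (simp add: field_simps)
      moreover have "dist (?x p) (?x q) \<le> \<bar>?x (q*p) - ?x p\<bar> + \<bar>?x (p*q) - ?x q\<bar>"
        unfolding dist_real_def by (simp add: mult.commute)
      ultimately show "dist (?x p) (?x q) < e" using 1 2 by linarith
    qed
  qed
  then show ?thesis by (simp add: Cauchy_convergent_iff)
qed

lemma Gm_close:
  assumes sw: "(\<Sum>b\<in>{1..r}. w b) = 0"
  shows "((\<lambda>N. G_fun n r B N w - G_fun n r B N (\<lambda>_. 0)) \<longlongrightarrow> 0) sequentially"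
proof -
  define M where "M = nat (\<Sum>b\<in>{1..r}. \<bar>w b\<bar>)"
  have wb: "\<forall>b\<in>{1..r}. \<bar>w b\<bar> \<le> int M"
  proof
    fix b assume b: "b \<in> {1..r}"
    have "\<bar>w b\<bar> \<le> (\<Sum>b\<in>{1..r}. \<bar>w b\<bar>)" by (rule member_le_sum) (use b in auto)
    then show "\<bar>w b\<bar> \<le> int M" unfolding M_def by simp
  qed
  define C where "C = real (n * (2*(r*M))) * 3^(n-r)"
  have bnd: "norm (G_fun n r B N w - G_fun n r B N (\<lambda>_. 0)) \<le> C / real N" if N: "N \<ge> 1" for N
  proof -
    have pos: "real N^(n-r+1) > 0" using N by simp
    have "G_fun n r B N w - G_fun n r B N (\<lambda>_. 0) = (real (card (Sol w N)) - aa N) / real N^(n-r+1)"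
      unfolding G_eq[OF N] aa_def by (simp add: diff_divide_distrib)
    then have "norm (G_fun n r B N w - G_fun n r B N (\<lambda>_. 0)) = \<bar>real (card (Sol w N)) - aa N\<bar> / real N^(n-r+1)"
      using pos by simp
    also have "\<dots> \<le> (C * real N^(n-r)) / real N^(n-r+1)"
      by (rule divide_right_mono) (use DFr[OF sw wb N] pos in \<open>simp_all add: C_def\<close>)
    also have "\<dots> = C / real N" using N by (simp add: field_simps)
    finally show ?thesis .
  qed
  show ?thesis
  proof (rule Lim_null_comparison)
    show "\<forall>\<^sub>F N in sequentially. norm (G_fun n r B N w - G_fun n r B N (\<lambda>_. 0)) \<le> C / real N"
      using bnd by (intro eventually_sequentiallyI[of 1]) auto
    show "((\<lambda>N. C / real N) \<longlongrightarrow> 0) sequentially" by (rule lim_const_over_n)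
  qed
qed

lemma main:
  assumes sw: "(\<Sum>b\<in>{1..r}. w b) = 0"
  shows "(\<lambda>N. G_fun n r B N w) \<longlonglongrightarrow> K_u n r B \<and> (\<lambda>N. G_fun n r B N (\<lambda>_. 0)) \<longlonglongrightarrow> K_u n r B"
proof -
  have 0: "(\<lambda>N. G_fun n r B N (\<lambda>_. 0)) \<longlonglongrightarrow> K_u n r B"
    using G0_conv unfolding K_u_def by (simp add: convergent_LIMSEQ_iff)
  have "(\<lambda>N. G_fun n r B N (\<lambda>_. 0) + (G_fun n r B N w - G_fun n r B N (\<lambda>_. 0))) \<longlonglongrightarrow> K_u n r B + 0"
    by (rule tendsto_add[OF 0 Gm_close[OF sw]])
  then show ?thesis using 0 by simp
qed

end

theorem lemma5:
  fixes n r :: nat and B :: "nat \<Rightarrow> nat set" and m :: "nat \<Rightarrow> int"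
  assumes "is_partition n r B"
    and "(\<Sum>b=1..r. m b) = 0"
  shows "(\<lambda>N. G_fun n r B N m) \<longlonglongrightarrow> K_u n r B \<and>
         (\<lambda>N. G_fun n r B N (\<lambda>_. 0)) \<longlonglongrightarrow> K_u n r B"
proof (cases "n \<ge> 1")
  case True
  interpret part n r B using assms(1) True by unfold_locales
  show ?thesis by (rule main[OF assms(2)])
next
  case False
  then have n0: "n = 0" by simp
  have r0: "r = 0"
  proof (rule ccontr)
    assume "r \<noteq> 0"
    then have "B 1 \<noteq> {}" "B 1 \<subseteq> (\<Union>b\<in>{1..r}. B b)" using assms(1) unfolding is_partition_def by auto
    moreover have "(\<Union>b\<in>{1..r}. B b) = {}" using assms(1) n0 unfolding is_partition_def by simp
    ultimately show False by blast
  qed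
  have S: "S_count n r B w N = 1" for w N
    unfolding S_count_def n0 r0 by simp
  have G: "G_fun n r B N w = 1 / real N" for w N
    unfolding G_fun_def using S[of w N] n0 r0 by simp
  have "(\<lambda>N. 1 / real N) \<longlonglongrightarrow> 0" by (rule lim_const_over_n)
  then have c: "convergent (\<lambda>N. G_fun n r B N (\<lambda>_. 0))" unfolding G convergent_def by blast
  then have "(\<lambda>N. G_fun n r B N (\<lambda>_. 0)) \<longlonglongrightarrow> K_u n r B" unfolding K_u_def by (simp add: convergent_LIMSEQ_iff)
  moreover have "(\<lambda>N. G_fun n r B N m) = (\<lambda>N. G_fun n r B N (\<lambda>_. 0))" unfolding G ..
  ultimately show ?thesis by simp
qed

end
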